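(* Let $X$ be a random variable with cumulative distribution function $F_X$ satisfying $F_X(x)=0$ for all $x\le 0$, and define the even function $k$ by \[ k(r)=\int_0^{\infty}\max\left\{0,1-\frac{|r|}{x}\right\}\,dF_X(x),\qquad r\in\mathbb{R}. \] Suppose $C:=\int_{-\infty}^{\infty}\frac{dF_X(x)}{x}$ is finite, and let $\widetilde{X}$ be a random variable with cumulative distribution function $F_{\widetilde{X}}(x)=\int_{-\infty}^{x}\frac{dF_X(t)}{Ct}$. Let $\varphi_{\widetilde{X}}(t)=E[e^{\mathbf{i} t\widetilde{X}}]$ denote the characteristic function of $\widetilde{X}$. Then \[ k(r)=[1-F_X(r)]-Cr\,[1-F_{\widetilde{X}}(r)],\qquad r\ge 0, \] and the Fourier transform of $k$ is \[ \mathcal{F}[k](t)=\frac{C}{t^2}\left[2-\varphi_{\widetilde{X}}(t)-\varphi_{\widetilde{X}}(-t)\right]. \]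
   Context: The Fourier transform is $\mathcal{F}[k](t)=\int_{-\infty}^{\infty}k(r)e^{\mathbf{i} rt}\,dr$, understood in the sense of generalized functions when $k$ is not absolutely integrable. Integrals against $dF$ are Lebesgue–Stieltjes integrals. *)

theory Defs
  imports "HOL-Probability.Probability"
begin

fun nderiv :: "nat \<Rightarrow> (real \<Rightarrow> complex) \<Rightarrow> real \<Rightarrow> complex" where
  "nderiv 0 f = f"
| "nderiv (Suc n) f = (\<lambda>x. vector_derivative (nderiv n f) (at x))"

definition test_function :: "(real \<Rightarrow> complex) \<Rightarrow> bool" where
  "test_function \<psi> \<longleftrightarrow>
     (\<forall>n x. nderiv n \<psi> differentiable (at x)) \<and> (\<exists>B. \<forall>x. \<bar>x\<bar> > B \<longrightarrow> \<psi> x = 0)"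

definition fourier :: "(real \<Rightarrow> complex) \<Rightarrow> real \<Rightarrow> complex" where
  "fourier \<psi> t = (LBINT r. \<psi> r * iexp (r * t))"

text \<open>The Fourier transform of a (locally integrable) function k, in the sense of
  generalized functions, equals the function g: tested against every test function.\<close>
definition fourier_gen_eq :: "(real \<Rightarrow> complex) \<Rightarrow> (real \<Rightarrow> complex) \<Rightarrow> bool" where
  "fourier_gen_eq k g \<longleftrightarrow>
     (\<forall>\<psi>. test_function \<psi> \<longrightarrow>
        integrable lborel (\<lambda>r. k r * fourier \<psi> r) \<and>
        integrable lborel (\<lambda>t. g t * \<psi> t) \<and>
        (LBINT r. k r * fourier \<psi> r) = (LBINT t. g t * \<psi> t))"

end

theory Submission
  imports Defs
begin


lemma iexp_mult_deriv: "((\<lambda>t. f t * iexp (t * r)) has_vector_derivative (f' * iexp (t*r) + f t * (\<i> * r * iexp (t*r)))) (at t within S)"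
  if "(f has_vector_derivative f') (at t within S)"
proof -
  have "((\<lambda>t. iexp (t * r)) has_vector_derivative (\<i> * r * iexp (t*r))) (at t within S)"
  proof -
    have "((\<lambda>t. t * r) has_vector_derivative r) (at t within S)"
      by (auto intro!: derivative_eq_intros)
    from vector_diff_chain_within[OF this has_vector_derivative_iexp]
    show ?thesis by (simp add: o_def scaleR_conv_of_real mult.assoc mult.left_commute[of "complex_of_real r"])
  qed
  from has_vector_derivative_mult[OF that this] show ?thesis by (simp add: algebra_simps)
qed
lemma cs_integral:
  fixes h :: "real \<Rightarrow> 'b::euclidean_space"
  assumes c: "continuous_on UNIV h" and z: "\<And>x. \<bar>x\<bar> > B \<Longrightarrow> h x = 0"
  shows "integrable lborel h" "integral\<^sup>L lborel h = integral {-B..B} h"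
proof -
  have eq: "h = (\<lambda>x. indicator {-B..B} x *\<^sub>R h x)"
    using z by (auto simp: indicator_def abs_le_iff fun_eq_iff not_le)
  have si: "set_integrable lborel {-B..B} h"
    unfolding set_integrable_def
    by (rule borel_integrable_compact) (auto intro: continuous_on_subset[OF c])
  then show "integrable lborel h" unfolding set_integrable_def by (subst eq)
  have "integral\<^sup>L lborel h = (LINT x:{-B..B}|lborel. h x)"
    unfolding set_lebesgue_integral_def by (subst eq) simp
  also have "\<dots> = integral {-B..B} h" by (rule set_borel_integral_eq_integral(2)[OF si])
  finally show "integral\<^sup>L lborel h = integral {-B..B} h" .
qed

lemma fourier_deriv:
  assumes d: "\<And>x. (f has_vector_derivative f' x) (at x)" and c: "continuous_on UNIV f'"
    and z: "\<And>x. \<bar>x\<bar> > B \<Longrightarrow> f x = 0 \<and> f' x = 0"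
  shows "fourier f' r = - (\<i> * r) * fourier f r"
    and "integrable lborel (\<lambda>t. f t * iexp (t * r))"
proof -
  define B1 where "B1 = \<bar>B\<bar> + 1"
  have z1: "\<bar>x\<bar> > B1 \<Longrightarrow> f x = 0 \<and> f' x = 0" for x using z[of x] unfolding B1_def by auto
  have cf: "continuous_on UNIV f"
    using d by (meson continuous_at_imp_continuous_on has_vector_derivative_continuous)
  define g' where "g' t = f' t * iexp (t*r) + f t * (\<i> * r * iexp (t*r))" for t
  have "((\<lambda>t. f t * iexp (t * r)) has_vector_derivative g' t) (at t within {-B1..B1})" for t
    unfolding g'_def by (rule iexp_mult_deriv) (rule has_vector_derivative_at_within[OF d])
  then have "(g' has_integral (f B1 * iexp (B1 * r) - f (-B1) * iexp (-B1 * r))) {-B1..B1}"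
    by (intro fundamental_theorem_of_calculus) (auto simp: B1_def)
  moreover have "\<bar>B1\<bar> > B" "\<bar>-B1\<bar> > B" unfolding B1_def by auto
  then have "f B1 = 0" "f (-B1) = 0" using z by blast+
  ultimately have i0: "integral {-B1..B1} g' = 0" by (simp add: integral_unique)
  have ce: "continuous_on UNIV (\<lambda>t. iexp (t * r))" by (intro continuous_intros)
  have i1: "integrable lborel (\<lambda>t. f' t * iexp (t * r))"
    by (rule cs_integral(1)[where B=B1]) (use z1 in \<open>auto intro!: continuous_intros c ce\<close>)
  have i2: "integrable lborel (\<lambda>t. f t * iexp (t * r))"
    by (rule cs_integral(1)[where B=B1]) (use z1 in \<open>auto intro!: continuous_intros cf ce\<close>)
  then show "integrable lborel (\<lambda>t. f t * iexp (t * r))" .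
  have e1: "integral\<^sup>L lborel g' = integral {-B1..B1} g'"
    by (rule cs_integral(2)) (use z1 in \<open>auto simp: g'_def intro!: continuous_intros c cf ce\<close>)
  have e2: "g' = (\<lambda>t. f' t * iexp(t*r) + (\<i> * r) * (f t * iexp (t*r)))"
    by (auto simp: g'_def fun_eq_iff algebra_simps)
  have e3: "integral\<^sup>L lborel g' = fourier f' r + (\<i> * r) * fourier f r"
    unfolding fourier_def e2
    using Bochner_Integration.integral_add[OF i1 integrable_mult_right[OF i2, of "\<i> * r"]] by (simp add: integral_mult_right_zero)
  show "fourier f' r = - (\<i> * r) * fourier f r" using i0 e1 e3 by (simp add: eq_neg_iff_add_eq_0)
qed
lemma nderiv_vanish:
  assumes d: "\<forall>n x. nderiv n \<psi> differentiable (at x)" and z: "\<forall>x. \<bar>x\<bar> > B \<longrightarrow> \<psi> x = 0"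
  shows "\<bar>x\<bar> > B \<Longrightarrow> nderiv n \<psi> x = 0"
proof (induction n arbitrary: x)
  case 0 then show ?case using z by simp
next
  case (Suc n)
  have "(nderiv n \<psi> has_vector_derivative vector_derivative (nderiv n \<psi>) (at x)) (at x)"
    using d by (simp add: vector_derivative_works)
  moreover have "((\<lambda>_. 0) has_vector_derivative 0) (at x)" by simp
  then have "(nderiv n \<psi> has_vector_derivative 0) (at x)"
    by (rule has_vector_derivative_transform_within_open[where S="{y. \<bar>y\<bar> > B}"])
       (use Suc in \<open>auto intro!: open_Collect_less continuous_intros\<close>)
  ultimately show ?case by (simp add: vector_derivative_at)
qed
declare nderiv.simps(2)[simp del]

lemma nderiv_has_deriv:
  assumes d: "\<forall>n x. nderiv n \<psi> differentiable (at x)"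
  shows "(nderiv n \<psi> has_vector_derivative nderiv (Suc n) \<psi> x) (at x)"
  using d by (simp add: vector_derivative_works nderiv.simps)
lemma nderiv_cont:
  assumes d: "\<forall>n x. nderiv n \<psi> differentiable (at x)"
  shows "continuous_on UNIV (nderiv n \<psi>)"
  using d by (meson continuous_at_imp_continuous_on differentiable_imp_continuous_within)

lemma integrable_inv_sq: "integrable lborel (\<lambda>x::real. inverse (1 + x^2))"
  using integrable_inverse_1_plus_square by (simp add: set_integrable_def)

lemma test_props:
  assumes "test_function \<psi>"
  obtains B where "B > 0" "\<And>x n. \<bar>x\<bar> > B \<Longrightarrow> nderiv n \<psi> x = 0"
    "\<And>n. continuous_on UNIV (nderiv n \<psi>)"
    "\<And>n x. (nderiv n \<psi> has_vector_derivative nderiv (Suc n) \<psi> x) (at x)"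
proof -
  from assms obtain B where d: "\<forall>n x. nderiv n \<psi> differentiable (at x)" and z: "\<forall>x. \<bar>x\<bar> > B \<longrightarrow> \<psi> x = 0"
    unfolding test_function_def by blast
  have z': "\<forall>x. \<bar>x\<bar> > \<bar>B\<bar>+1 \<longrightarrow> \<psi> x = 0" using z by auto
  show ?thesis
    by (rule that[of "\<bar>B\<bar>+1"]) (auto intro: nderiv_vanish[OF d z'] nderiv_cont[OF d] nderiv_has_deriv[OF d])
qed

lemma test_fourier:
  assumes "test_function \<psi>"
  shows "fourier \<psi> \<in> borel_measurable lborel" "integrable lborel (fourier \<psi>)"
    "\<exists>K. \<forall>r. norm (fourier \<psi> r) \<le> K"
proof -
  obtain B where B: "B > 0" "\<And>x n. \<bar>x\<bar> > B \<Longrightarrow> nderiv n \<psi> x = 0"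
    "\<And>n. continuous_on UNIV (nderiv n \<psi>)"
    "\<And>n x. (nderiv n \<psi> has_vector_derivative nderiv (Suc n) \<psi> x) (at x)"
    using test_props[OF assms] by blast
  have fd: "fourier (nderiv (Suc n) \<psi>) r = - (\<i> * r) * fourier (nderiv n \<psi>) r" for n r
    by (rule fourier_deriv(1)[where B=B]) (use B in auto)
  have f2: "fourier (nderiv 2 \<psi>) r = - (r^2) * fourier \<psi> r" for r
    using fd[of 1 r] fd[of 0 r] by (simp add: numeral_2_eq_2 power2_eq_square algebra_simps)
  have bnd: "norm (fourier (nderiv n \<psi>) r) \<le> (LBINT t. norm (nderiv n \<psi> t))" for n r
    using integral_norm_bound[of lborel "\<lambda>t. nderiv n \<psi> t * iexp (t * r)"]
    by (simp add: fourier_def norm_mult)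
  have meas: "(\<lambda>(r,t). \<psi> t * iexp (t * r)) \<in> borel_measurable (lborel \<Otimes>\<^sub>M lborel)"
  proof -
    have "\<psi> \<in> borel_measurable borel" using B(3)[of 0] by (simp add: borel_measurable_continuous_onI)
    then show ?thesis by measurable
  qed
  show "fourier \<psi> \<in> borel_measurable lborel"
    unfolding fourier_def using lborel.borel_measurable_lebesgue_integral[OF meas] by simp
  define K0 where "K0 = (LBINT t. norm (nderiv 0 \<psi> t))"
  define K2 where "K2 = (LBINT t. norm (nderiv 2 \<psi> t))"
  have K0: "norm (fourier \<psi> r) \<le> K0" for r using bnd[of 0 r] by (simp add: K0_def)
  then show "\<exists>K. \<forall>r. norm (fourier \<psi> r) \<le> K" by blast
  have K2: "r^2 * norm (fourier \<psi> r) \<le> K2" for r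
    using bnd[of 2 r] f2[of r] by (simp add: K2_def norm_mult norm_power)
  have "K0 \<ge> 0" using K0[of 0] norm_ge_zero order_trans by blast
  have dec: "norm (fourier \<psi> r) \<le> 2 * (K0 + K2) * inverse (1 + r^2)" for r
  proof (cases "r^2 \<le> 1")
    case True
    have "norm (fourier \<psi> r) * (1 + r^2) \<le> K0 * 2"
      using K0[of r] True \<open>K0 \<ge> 0\<close> by (intro mult_mono) auto
    moreover have "K2 \<ge> 0" using K2[of 0] by simp
    ultimately show ?thesis
      by (simp add: field_simps add_pos_nonneg)
  next
    case False
    have "norm (fourier \<psi> r) * (1 + r^2) \<le> norm (fourier \<psi> r) * (2 * r^2)"
      using False by (intro mult_left_mono) auto
    also have "\<dots> \<le> 2 * K2" using K2[of r] by (simp add: mult.commute)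
    finally show ?thesis using \<open>K0 \<ge> 0\<close>
      by (simp add: field_simps add_pos_nonneg)
  qed
  show "integrable lborel (fourier \<psi>)"
  proof (rule Bochner_Integration.integrable_bound)
    show "integrable lborel (\<lambda>r. 2 * (K0 + K2) * inverse (1 + r^2))"
      using integrable_inv_sq by simp
    show "fourier \<psi> \<in> borel_measurable lborel" by fact
    show "AE r in lborel. norm (fourier \<psi> r) \<le> norm (2 * (K0 + K2) * inverse (1 + r^2))"
      using dec by (intro AE_I2) (metis abs_ge_self order_trans real_norm_def)
  qed
qed



lemma lin_iexp_has_integral:
  assumes "c \<le> d"
  shows "((\<lambda>r. (\<alpha> + \<i> * t * (of_real r * \<alpha> + \<beta>)) * iexp (r * t)) has_integral
     ((of_real d * \<alpha> + \<beta>) * iexp (d * t) - (of_real c * \<alpha> + \<beta>) * iexp (c * t))) {c..d}"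
proof -
  have "((\<lambda>r. (of_real r * \<alpha> + \<beta>) * iexp (r * t)) has_vector_derivative
      (\<alpha> + \<i> * t * (of_real r * \<alpha> + \<beta>)) * iexp (r * t)) (at r within {c..d})" for r
  proof -
    have "((\<lambda>r. of_real r * \<alpha> + \<beta>) has_vector_derivative \<alpha>) (at r within {c..d})"
      by (auto intro!: derivative_eq_intros)
    from iexp_mult_deriv[OF this, of t] show ?thesis by (simp add: algebra_simps)
  qed
  then show ?thesis using assms by (intro fundamental_theorem_of_calculus) auto
qed


definition tri :: "real \<Rightarrow> real \<Rightarrow> real" where "tri a r = max 0 (1 - \<bar>r\<bar> / a)"

definition TT :: "real \<Rightarrow> real \<Rightarrow> complex" where
  "TT a t = (2 - iexp (a * t) - iexp (- (a * t))) / complex_of_real (a * t^2)"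

lemma tri_fourier:
  assumes a: "a > 0" and t: "t \<noteq> 0"
  shows "integrable lborel (\<lambda>r. complex_of_real (tri a r) * iexp (r * t))"
    "(LBINT r. complex_of_real (tri a r) * iexp (r * t)) = TT a t"
proof -
  let ?f = "\<lambda>r. complex_of_real (tri a r) * iexp (r * t)"
  have cont: "continuous_on UNIV ?f" unfolding tri_def by (intro continuous_intros) (use a in auto)
  have z: "\<bar>r\<bar> > a \<Longrightarrow> ?f r = 0" for r using a by (simp add: tri_def)
  show "integrable lborel ?f" by (rule cs_integral(1)[OF cont z])
  have I: "integral\<^sup>L lborel ?f = integral {-a..a} ?f" by (rule cs_integral(2)[OF cont z])
  define \<alpha>1 where "\<alpha>1 = \<i> / of_real (a * t)"
  define \<beta>1 where "\<beta>1 = 1 / (\<i> * t) - 1 / of_real (a * t^2)"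
  have h1: "(?f has_integral ((of_real a * \<alpha>1 + \<beta>1) * iexp (a * t) - (of_real 0 * \<alpha>1 + \<beta>1) * iexp (0 * t))) {0..a}"
  proof (rule has_integral_eq[OF _ lin_iexp_has_integral])
    fix r assume r: "r \<in> {0..a}"
    then have "tri a r = 1 - r / a" using a by (auto simp: tri_def field_simps)
    then have "complex_of_real (tri a r) = 1 - of_real r / of_real a" by simp
    then show "(\<alpha>1 + \<i> * t * (of_real r * \<alpha>1 + \<beta>1)) * iexp (r * t) = ?f r"
      using a t by (simp only: \<open>complex_of_real (tri a r) = _\<close>) (simp add: \<alpha>1_def \<beta>1_def field_simps power2_eq_square)
  qed (use a in auto)
  define \<alpha>2 where "\<alpha>2 = - \<i> / of_real (a * t)"
  define \<beta>2 where "\<beta>2 = 1 / (\<i> * t) + 1 / of_real (a * t^2)"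
  have h2: "(?f has_integral ((of_real 0 * \<alpha>2 + \<beta>2) * iexp (0 * t) - (of_real (-a) * \<alpha>2 + \<beta>2) * iexp ((-a) * t))) {-a..0}"
  proof (rule has_integral_eq[OF _ lin_iexp_has_integral])
    fix r assume r: "r \<in> {-a..0}"
    then have "tri a r = 1 + r / a" using a by (auto simp: tri_def field_simps)
    then have "complex_of_real (tri a r) = 1 + of_real r / of_real a" by simp
    then show "(\<alpha>2 + \<i> * t * (of_real r * \<alpha>2 + \<beta>2)) * iexp (r * t) = ?f r"
      using a t by (simp only: \<open>complex_of_real (tri a r) = _\<close>) (simp add: \<alpha>2_def \<beta>2_def field_simps power2_eq_square)
  qed (use a in auto)
  have "integral {-a..a} ?f = integral {-a..0} ?f + integral {0..a} ?f"
    by (rule Henstock_Kurzweil_Integration.integral_combine[symmetric]) (use a integrable_continuous_interval[OF continuous_on_subset[OF cont]] in auto)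
  also have "\<dots> = TT a t"
  proof -
    have q1: "of_real a * \<alpha>1 + \<beta>1 = - 1/of_real(a*t^2)"
      using a t by (simp add: \<alpha>1_def \<beta>1_def field_simps power2_eq_square)
    have q2: "of_real (-a) * \<alpha>2 + \<beta>2 = 1/of_real(a*t^2)"
      using a t by (simp add: \<alpha>2_def \<beta>2_def field_simps power2_eq_square)
    have q3: "\<beta>2 - \<beta>1 = 2/of_real(a*t^2)"
      using a t by (simp add: \<alpha>2_def \<beta>2_def \<beta>1_def field_simps power2_eq_square)
    have "integral {-a..0} ?f + integral {0..a} ?f
       = (\<beta>2 - \<beta>1) - (of_real (-a) * \<alpha>2 + \<beta>2) * iexp (-(a * t)) + (of_real a * \<alpha>1 + \<beta>1) * iexp (a * t)"
      using integral_unique[OF h1] integral_unique[OF h2] by simp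
    also have "\<dots> = TT a t" unfolding q1 q2 q3 TT_def by (simp add: diff_divide_distrib)
    finally show ?thesis .
  qed
  finally show "(LBINT r. complex_of_real (tri a r) * iexp (r * t)) = TT a t" using I by simp
qed



lemma two_minus_iexp: "2 - iexp u - iexp (- u) = complex_of_real (2 - 2 * cos u)"
proof -
  have "iexp u = cis u" "iexp (-u) = cis (-u)" by (simp_all add: cis_conv_exp)
  then show ?thesis by (simp add: complex_eq_iff cis.sel)
qed

lemma one_minus_cos_le: "1 - cos (u::real) \<le> u^2 / 2"
proof -
  have "cos u = cos (2 * (u/2))" by simp
  also have "\<dots> = 1 - 2 * (sin (u/2))^2" by (rule cos_double_sin)
  finally have "1 - cos u = 2 * (sin (u/2))^2" by simp
  also have "\<dots> \<le> 2 * (u/2)^2"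
    using abs_sin_x_le_abs_x[of "u/2"] by (metis abs_le_square_iff mult_left_mono zero_le_numeral)
  finally show ?thesis by (simp add: power2_eq_square)
qed

lemma TT_bound:
  assumes a: "a > 0"
  shows "norm (TT a t) \<le> 8 * a / (1 + (a * t)^2)"
proof (cases "t = 0")
  case True then show ?thesis using a by (simp add: TT_def)
next
  case t: False
  have n: "norm (TT a t) = (2 - 2 * cos (a*t)) / (a * t^2)"
    unfolding TT_def two_minus_iexp norm_divide norm_of_real using a cos_le_one[of "a*t"] by simp
  have at: "(a*t)^2 > 0" using a t by simp
  show ?thesis
  proof (cases "(a*t)^2 \<le> 1")
    case True
    have "(2 - 2 * cos (a*t)) \<le> (a*t)^2" using one_minus_cos_le[of "a*t"] by simp
    then have "norm (TT a t) \<le> (a*t)^2 / (a * t^2)" unfolding n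
      using a t by (intro divide_right_mono) auto
    also have "\<dots> = a" using a t by (simp add: power2_eq_square field_simps)
    also have "\<dots> \<le> 8 * a / (1 + (a * t)^2)"
    proof -
      have "a * (1 + (a * t)^2) \<le> 8 * a" using True a by simp
      then show ?thesis using at by (simp add: field_simps)
    qed
    finally show ?thesis .
  next
    case False
    have "norm (TT a t) \<le> 4 / (a * t^2)" unfolding n
      using a t cos_ge_minus_one[of "a*t"] by (intro divide_right_mono) (linarith, simp)
    also have "\<dots> = 4 * a / (a*t)^2" using a t by (simp add: power2_eq_square field_simps)
    also have "\<dots> \<le> 8 * a / (1 + (a * t)^2)" using False a at by (simp add: field_simps)
    finally show ?thesis .
  qed
qed


lemma inv_sq_scaled:
  fixes a :: real assumes a: "a > 0"
  shows "integrable lborel (\<lambda>t. 8 * a / (1 + (a * t)^2))"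
    "(LBINT t. 8 * a / (1 + (a * t)^2)) = 8 * (LBINT u. inverse (1 + u^2))"
proof -
  have i: "integrable lborel (\<lambda>t. inverse (1 + (0 + a * t)^2))"
    using lborel_integrable_real_affine[OF integrable_inv_sq, of a 0] a by simp
  then show "integrable lborel (\<lambda>t. 8 * a / (1 + (a * t)^2))"
    by (simp add: divide_inverse mult.assoc)
  have "(LBINT u. inverse (1 + u^2)) = \<bar>a\<bar> * (LBINT t. inverse (1 + (0 + a * t)^2))"
    using lborel_integral_real_affine[of a "\<lambda>u. inverse (1 + u^2)" 0] a by simp
  then show "(LBINT t. 8 * a / (1 + (a * t)^2)) = 8 * (LBINT u. inverse (1 + u^2))"
    using a by (simp add: divide_inverse mult.assoc)
qed

lemma test_bounded:
  assumes "test_function \<psi>"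
  obtains M where "\<And>t. norm (\<psi> t) \<le> M" "integrable lborel \<psi>" "continuous_on UNIV \<psi>"
proof -
  obtain B where B: "B > 0" "\<And>x n. \<bar>x\<bar> > B \<Longrightarrow> nderiv n \<psi> x = 0"
    "\<And>n. continuous_on UNIV (nderiv n \<psi>)"
    "\<And>n x. (nderiv n \<psi> has_vector_derivative nderiv (Suc n) \<psi> x) (at x)"
    using test_props[OF assms] by blast
  have c: "continuous_on UNIV \<psi>" using B(3)[of 0] by simp
  have "compact (\<psi> ` {-B..B})" by (rule compact_continuous_image[OF continuous_on_subset[OF c]]) auto
  then have "bounded (\<psi> ` {-B..B})" by (rule compact_imp_bounded)
  then obtain M where M: "\<And>y. y \<in> \<psi> ` {-B..B} \<Longrightarrow> norm y \<le> M"
    unfolding bounded_iff by blast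
  have "norm (\<psi> t) \<le> M" for t
  proof (cases "\<bar>t\<bar> > B")
    case True
    have "\<psi> (-B) \<in> \<psi> ` {-B..B}" using B(1) by auto
    then have "0 \<le> M" using M[of "\<psi> (-B)"] norm_ge_zero order_trans by blast
    with True show ?thesis using B(2)[of t 0] by auto
  next
    case False then have "t \<in> {-B..B}" by auto
    then show ?thesis using M[of "\<psi> t"] by auto
  qed
  moreover have "integrable lborel \<psi>" by (rule cs_integral(1)[OF c, of B]) (use B(2)[of _ 0] in simp)
  ultimately show ?thesis using that c by blast
qed

lemma tri_integrable: "a > 0 \<Longrightarrow> integrable lborel (tri a)"
  by (rule cs_integral(1)[of _ a]) (auto simp: tri_def intro!: continuous_intros)

lemma tri_nonneg: "tri a r \<ge> 0" by (simp add: tri_def)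

lemma inner_fubini:
  assumes a: "a > 0" and \<psi>: "test_function \<psi>"
  shows "(LBINT r. complex_of_real (tri a r) * fourier \<psi> r) = (LBINT t. \<psi> t * TT a t)"
proof -
  obtain M where M: "\<And>t. norm (\<psi> t) \<le> M" "integrable lborel \<psi>" "continuous_on UNIV \<psi>"
    using test_bounded[OF \<psi>] by blast
  have \<psi>m[measurable]: "\<psi> \<in> borel_measurable borel" using M(3) by (simp add: borel_measurable_continuous_onI)

  define f where "f r t = complex_of_real (tri a r) * (\<psi> t * iexp (t*r))" for r t
  have fm: "(\<lambda>(r,t). f r t) \<in> borel_measurable (lborel \<Otimes>\<^sub>M lborel)"
    unfolding f_def tri_def by measurable
  have ie: "integrable lborel (\<lambda>t. \<psi> t * iexp (t*r))" for r
    by (rule Bochner_Integration.integrable_bound[OF integrable_norm[OF M(2)]]) (auto simp: norm_mult)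
  have nf: "norm (f r t) = tri a r * norm (\<psi> t)" for r t
    by (simp add: f_def norm_mult tri_nonneg)
  have int: "integrable (lborel \<Otimes>\<^sub>M lborel) (\<lambda>(r,t). f r t)"
  proof (rule lborel_pair.Fubini_integrable)
    show "(\<lambda>(r,t). f r t) \<in> borel_measurable (lborel \<Otimes>\<^sub>M lborel)" by (rule fm)
    show "integrable lborel (\<lambda>r. LINT t|lborel. norm (case (r, t) of (r, t) \<Rightarrow> f r t))"
    proof -
      have "(\<lambda>r. LINT t|lborel. norm (f r t)) = (\<lambda>r. tri a r * (LBINT t. norm (\<psi> t)))"
        unfolding nf by (simp add: fun_eq_iff)
      then show ?thesis using tri_integrable[OF a] by simp
    qed
    show "AE r in lborel. integrable lborel (\<lambda>t. case (r, t) of (r, t) \<Rightarrow> f r t)"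
      unfolding f_def using integrable_mult_right[OF ie] by simp
  qed
  have "(LBINT t. LBINT r. f r t) = (LBINT r. LBINT t. f r t)"
    using lborel_pair.Fubini_integral[of f] int by simp
  also have "(LBINT r. LBINT t. f r t) = (LBINT r. complex_of_real (tri a r) * fourier \<psi> r)"
    unfolding f_def fourier_def by (simp add: integral_mult_right_zero)
  also have "(LBINT t. LBINT r. f r t) = (LBINT t. \<psi> t * TT a t)"
  proof (rule integral_cong_AE)
    show "AE t in lborel. (LBINT r. f r t) = \<psi> t * TT a t"
      using AE_lborel_singleton[of 0]
    proof eventually_elim
      case (elim t)
      have "(LBINT r. f r t) = \<psi> t * (LBINT r. complex_of_real (tri a r) * iexp (r * t))"
      proof -
        have "f r t = \<psi> t * (complex_of_real (tri a r) * iexp (r * t))" for r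
          unfolding f_def by (simp add: ac_simps)
        then show ?thesis by (simp add: integral_mult_right_zero)
      qed
      then show ?case using tri_fourier(2)[OF a elim] by simp
    qed
    show "(\<lambda>t. LBINT r. f r t) \<in> borel_measurable lborel" using fm by measurable
    show "(\<lambda>t. \<psi> t * TT a t) \<in> borel_measurable lborel" unfolding TT_def by measurable
  qed
  finally show ?thesis by simp
qed



lemma part_setup:
  fixes M :: "'a measure" and X :: "'a \<Rightarrow> real"
  assumes "prob_space M" and "X \<in> borel_measurable M"
    and "\<forall>x\<le>0. cdf (distr M borel X) x = 0"
    and "integrable (distr M borel X) (\<lambda>x. 1 / x)"
  shows "AE x in distr M borel X. x > 0"
    "(LINT x|distr M borel X. 1 / x) > 0"
proof -
  interpret M: prob_space M by fact
  define D where "D = distr M borel X"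
  interpret D: real_distribution D unfolding D_def using assms(2) by simp
  have "measure D {..0} = 0" using assms(3) by (simp add: cdf_def D_def)
  then have "{..0} \<in> null_sets D" by (simp add: D.emeasure_eq_measure null_sets_def)
  then show pos: "AE x in distr M borel X. x > 0" unfolding D_def[symmetric]
    by (rule AE_I') auto
  have int: "integrable D (\<lambda>x. 1 / x)" using assms(4) D_def by simp
  have nn: "AE x in D. 0 \<le> 1 / x" using pos unfolding D_def[symmetric] by eventually_elim simp
  have ge: "(LINT x|D. 1 / x) \<ge> 0" using nn by (rule integral_nonneg_AE)
  moreover have "(LINT x|D. 1 / x) \<noteq> 0"
  proof
    assume "(LINT x|D. 1 / x) = 0"
    then have "AE x in D. 1 / x = 0" using integral_nonneg_eq_0_iff_AE[OF int nn] by simp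
    with pos have "AE x in D. False" unfolding D_def[symmetric] by eventually_elim simp
    then show False by simp
  qed
  ultimately show "(LINT x|distr M borel X. 1 / x) > 0" unfolding D_def by simp
qed

lemma part1:
  fixes M :: "'a measure" and X :: "'a \<Rightarrow> real"
    and N :: "'b measure" and Xt :: "'b \<Rightarrow> real"
    and k :: "real \<Rightarrow> real" and C :: real and r :: real
  assumes "prob_space M" and "X \<in> borel_measurable M"
    and "\<forall>x\<le>0. cdf (distr M borel X) x = 0"
    and k_def: "\<forall>r. k r = (LINT x:{0..}|distr M borel X. max 0 (1 - \<bar>r\<bar> / x))"
    and "integrable (distr M borel X) (\<lambda>x. 1 / x)"
    and C_def: "C = (LINT x|distr M borel X. 1 / x)"
    and "\<forall>x. cdf (distr N borel Xt) x = (LINT t:{..x}|distr M borel X. 1 / (C * t))"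
    and r: "r \<ge> 0"
  shows "k r = (1 - cdf (distr M borel X) r) - C * r * (1 - cdf (distr N borel Xt) r)"
proof -
  interpret M: prob_space M by fact
  define D where "D = distr M borel X"
  interpret D: real_distribution D unfolding D_def using assms(2) by simp
  have pos: "AE x in D. x > 0" and Cpos: "C > 0"
    using part_setup[OF assms(1,2,3,5)] C_def unfolding D_def by auto
  have int: "integrable D (\<lambda>x. 1 / x)" using assms(5) D_def by simp
  have "k r = (LINT x|D. indicator {r<..} x * (1 - r / x))"
    unfolding k_def[rule_format] D_def[symmetric] set_lebesgue_integral_def
  proof (rule integral_cong_AE)
    show "AE x in D. indicator {0..} x *\<^sub>R max 0 (1 - \<bar>r\<bar> / x) = indicator {r<..} x * (1 - r / x)"
      using pos
    proof eventually_elim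
      case (elim x)
      show ?case
      proof (cases "x > r")
        case True then show ?thesis using elim r by (simp add: field_simps)
      next
        case False then have "1 - r / x \<le> 0" using elim by (simp add: field_simps)
        then show ?thesis using elim False r by (simp add: max_def)
      qed
    qed
  qed (simp_all add: D_def)
  also have "\<dots> = (LINT x|D. indicator {r<..} x) - r * (LINT x|D. 1 / x * indicator {r<..} x)"
  proof -
    have i1: "integrable D (\<lambda>x. indicator {r<..} x :: real)"
      by (rule D.integrable_const_bound[where B=1]) (auto simp: D_def)
    have i2: "integrable D (\<lambda>x. 1 / x * indicator {r<..} x)"
      by (rule integrable_real_mult_indicator[OF _ int]) (simp add: D_def)
    have "(LINT x|D. indicator {r<..} x * (1 - r / x)) = (LINT x|D. indicator {r<..} x - r * (1 / x * indicator {r<..} x))"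
      by (rule Bochner_Integration.integral_cong) (auto simp: indicator_def algebra_simps)
    also have "\<dots> = (LINT x|D. indicator {r<..} x) - r * (LINT x|D. 1 / x * indicator {r<..} x)"
      by (simp only: Bochner_Integration.integral_diff[OF i1 integrable_mult_right[OF i2]] Bochner_Integration.integral_mult_right[OF i2])
    finally show ?thesis .
  qed
  also have "(LINT x|D. indicator {r<..} x) = 1 - cdf D r"
  proof -
    have m: "(LINT x|D. indicator {r<..} x) = measure D {r<..}" by (simp add: D_def)
    also have sp: "{r<..} = space D - {..r}" by (auto simp: D_def)
    have "measure D {r<..} = measure D (space D - {..r})" by (simp only: sp)
    also have "measure D (space D - {..r}) = 1 - cdf D r"
      by (subst D.prob_compl) (auto simp: cdf_def D_def)
    finally show ?thesis using m by simp
  qed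
  also have "r * (LINT x|D. 1 / x * indicator {r<..} x) = C * r * (1 - cdf (distr N borel Xt) r)"
  proof -
    have j1: "integrable D (\<lambda>x. 1 / x * indicator {..r} x)"
      by (rule integrable_real_mult_indicator[OF _ int]) (simp add: D_def)
    have j2: "integrable D (\<lambda>x. 1 / x * indicator {r<..} x)"
      by (rule integrable_real_mult_indicator[OF _ int]) (simp add: D_def)
    have "C = (LINT x|D. 1 / x * indicator {..r} x + 1 / x * indicator {r<..} x)"
      unfolding C_def D_def[symmetric] by (intro Bochner_Integration.integral_cong) (auto simp: indicator_def)
    also have "\<dots> = (LINT x|D. 1 / x * indicator {..r} x) + (LINT x|D. 1 / x * indicator {r<..} x)"
      using j1 j2 by simp
    finally have Csplit: "C = \<dots>" .
    have "cdf (distr N borel Xt) r = (LINT t|D. indicator {..r} t *\<^sub>R (1 / (C * t)))"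
      using assms(7) unfolding set_lebesgue_integral_def D_def by simp
    also have "\<dots> = (1 / C) * (LINT t|D. 1 / t * indicator {..r} t)"
      by (subst integral_mult_right_zero[symmetric]) (intro Bochner_Integration.integral_cong, auto simp: indicator_def)
    finally have "cdf (distr N borel Xt) r = \<dots>" .
    then have eqF: "C * cdf (distr N borel Xt) r = (LINT t|D. 1 / t * indicator {..r} t)"
      using Cpos by simp
    have "C * r * (1 - cdf (distr N borel Xt) r) = r * (C - C * cdf (distr N borel Xt) r)"
      by (simp add: algebra_simps)
    also have "\<dots> = r * (LINT x|D. 1 / x * indicator {r<..} x)"
      unfolding eqF by (subst Csplit) simp
    finally show ?thesis by (metis mult.assoc)
  qed
  finally show ?thesis unfolding D_def by simp
qed
lemma char_formula:
  fixes M :: "'a measure" and X :: "'a \<Rightarrow> real"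
    and N :: "'b measure" and Xt :: "'b \<Rightarrow> real" and C :: real
  assumes "prob_space M" and "X \<in> borel_measurable M"
    and "\<forall>x\<le>0. cdf (distr M borel X) x = 0"
    and "integrable (distr M borel X) (\<lambda>x. 1 / x)"
    and C_def: "C = (LINT x|distr M borel X. 1 / x)"
    and "prob_space N" and "Xt \<in> borel_measurable N"
    and "\<forall>x. cdf (distr N borel Xt) x = (LINT t:{..x}|distr M borel X. 1 / (C * t))"
  shows "char (distr N borel Xt) t = (LINT x|distr M borel X. (1 / (C * x)) *\<^sub>R iexp (t * x))"
proof -
  interpret M: prob_space M by fact
  interpret N: prob_space N by fact
  define D where "D = distr M borel X"
  interpret D: real_distribution D unfolding D_def using assms(2) by simp
  have pos: "AE x in D. x > 0" and Cpos: "C > 0"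
    using part_setup[OF assms(1,2,3,4)] C_def unfolding D_def by auto
  have int: "integrable D (\<lambda>x. 1 / x)" using assms(4) D_def by simp
  define g where "g x = 1 / (C * x)" for x
  have gm[measurable]: "g \<in> borel_measurable D" unfolding g_def D_def by measurable
  have gnn: "AE x in D. 0 \<le> g x" using pos by eventually_elim (use Cpos in \<open>simp add: g_def\<close>)
  have gint: "integrable D g" unfolding g_def using integrable_mult_right[OF int, of "1/C"] by simp
  define Dt where "Dt = density D (\<lambda>x. ennreal (g x))"
  have sDt: "sets Dt = sets borel" by (simp add: Dt_def D_def)
  have mDt: "measure Dt A = (LINT x|D. g x * indicator A x)"
     and eDt: "emeasure Dt A = ennreal (LINT x|D. g x * indicator A x)" if "A \<in> sets borel" for A
  proof -
    have "emeasure Dt A = (\<integral>\<^sup>+x. ennreal (g x) * indicator A x \<partial>D)"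
      unfolding Dt_def using that by (subst emeasure_density) (auto simp: D_def)
    also have "\<dots> = (\<integral>\<^sup>+x. ennreal (g x * indicator A x) \<partial>D)"
      by (intro nn_integral_cong) (auto simp: indicator_def)
    also have "\<dots> = ennreal (LINT x|D. g x * indicator A x)"
    proof (rule nn_integral_eq_integral)
      show "integrable D (\<lambda>x. g x * indicator A x)"
        by (rule integrable_real_mult_indicator[OF _ gint]) (simp add: D_def that)
      show "AE x in D. 0 \<le> g x * indicator A x" using gnn by eventually_elim (simp add: indicator_def)
    qed
    finally have e: "emeasure Dt A = ennreal (LINT x|D. g x * indicator A x)" .
    then show "emeasure Dt A = ennreal (LINT x|D. g x * indicator A x)" .
    moreover have "(LINT x|D. g x * indicator A x) \<ge> 0"
      by (rule integral_nonneg_AE) (use gnn in \<open>eventually_elim, simp add: indicator_def\<close>)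
    ultimately show "measure Dt A = (LINT x|D. g x * indicator A x)" unfolding measure_def by simp
  qed
  have "(LINT x|D. g x) = (LINT x|D. (1/C) * (1/x))" unfolding g_def by simp
  also have "\<dots> = (1/C) * C" unfolding integral_mult_right_zero C_def D_def ..
  finally have ig: "(LINT x|D. g x) = 1" using Cpos by simp
  have "emeasure Dt (space Dt) = 1" using eDt[of UNIV] ig by (simp add: Dt_def D_def)
  then have "prob_space Dt" by (rule prob_spaceI)
  then have rDt: "real_distribution Dt"
    unfolding real_distribution_def real_distribution_axioms_def using sDt by simp
  have rNd: "real_distribution (distr N borel Xt)" using assms(7) by simp
  have "cdf (distr N borel Xt) = cdf Dt"
  proof
    fix x
    have "cdf Dt x = (LINT t|D. g t * indicator {..x} t)" unfolding cdf_def by (simp add: mDt)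
    also have "\<dots> = (LINT t:{..x}|D. 1 / (C * t))"
      unfolding set_lebesgue_integral_def g_def by (simp add: mult.commute)
    finally show "cdf (distr N borel Xt) x = cdf Dt x" using assms(8) D_def by simp
  qed
  then have eq: "distr N borel Xt = Dt" using cdf_unique[OF rNd rDt] by simp
  have "char Dt t = (LINT x|D. g x *\<^sub>R iexp (t * x))"
    unfolding char_def Dt_def by (rule integral_density) (auto simp: gnn)
  then show ?thesis using eq by (simp add: g_def D_def)
qed


lemma G_formula:
  fixes D :: "real measure" and C :: real and ch :: "real \<Rightarrow> complex"
  assumes D: "real_distribution D" and int: "integrable D (\<lambda>x. 1 / x)"
    and C_def: "C = (LINT x|D. 1 / x)" and Cpos: "C > 0"
    and ch: "\<And>t. ch t = (LINT x|D. (1 / (C * x)) *\<^sub>R iexp (t * x))"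
  shows "integrable D (\<lambda>x. TT x t)"
    "complex_of_real (C / t\<^sup>2) * (2 - ch t - ch (- t)) = (LINT x|D. TT x t)"
proof -
  interpret D: real_distribution D by fact
  define h where "h s x = complex_of_real (1 / x) * iexp (s * x)" for s x
  have hi: "integrable D (h s)" for s
  proof (rule Bochner_Integration.integrable_bound[OF int])
    show "h s \<in> borel_measurable D" unfolding h_def by measurable
    show "AE x in D. norm (h s x) \<le> norm (1 / x)" unfolding h_def by (intro AE_I2) (simp add: norm_mult del: of_real_divide)
  qed
  have chh: "ch s = complex_of_real (1 / C) * (LINT x|D. h s x)" for s
    unfolding ch h_def integral_mult_right_zero[symmetric]
    by (intro Bochner_Integration.integral_cong) (simp_all add: scaleR_conv_of_real)
  have TTeq: "TT x t = complex_of_real (1 / t\<^sup>2) * (2 * complex_of_real (1 / x) - h t x - h (- t) x)" for x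
    unfolding TT_def h_def by (cases "x = 0"; cases "t = 0") (simp_all add: field_simps mult.commute)
  have ic: "integrable D (\<lambda>x. complex_of_real (1 / x))" by (rule integrable_of_real[OF int])
  have i3: "integrable D (\<lambda>x. 2 * complex_of_real (1 / x) - h t x)"
    using ic hi by (intro Bochner_Integration.integrable_diff integrable_mult_right) auto
  have i2: "integrable D (\<lambda>x. 2 * complex_of_real (1 / x) - h t x - h (- t) x)"
    using ic hi by (intro Bochner_Integration.integrable_diff integrable_mult_right) auto
  show "integrable D (\<lambda>x. TT x t)" unfolding TTeq using i2 by (rule integrable_mult_right)
  have "(LINT x|D. TT x t) = complex_of_real (1 / t\<^sup>2) * (LINT x|D. 2 * complex_of_real (1 / x) - h t x - h (- t) x)"
    unfolding TTeq by (rule integral_mult_right_zero)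
  also have "(LINT x|D. 2 * complex_of_real (1 / x) - h t x - h (- t) x)
      = 2 * complex_of_real C - (LINT x|D. h t x) - (LINT x|D. h (- t) x)"
  proof -
    have "(LINT x|D. 2 * complex_of_real (1 / x) - h t x - h (- t) x)
      = (LINT x|D. 2 * complex_of_real (1 / x) - h t x) - (LINT x|D. h (- t) x)"
      by (rule Bochner_Integration.integral_diff[OF i3 hi])
    also have "(LINT x|D. 2 * complex_of_real (1 / x) - h t x) = (LINT x|D. 2 * complex_of_real (1 / x)) - (LINT x|D. h t x)"
      by (rule Bochner_Integration.integral_diff[OF integrable_mult_right[OF ic] hi])
    also have "(LINT x|D. 2 * complex_of_real (1 / x)) = 2 * complex_of_real C"
      unfolding C_def integral_mult_right_zero using integral_complex_of_real[of D "\<lambda>x. 1 / x"] by (simp del: of_real_divide)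
    finally show ?thesis .
  qed
  finally show "complex_of_real (C / t\<^sup>2) * (2 - ch t - ch (- t)) = (LINT x|D. TT x t)"
    unfolding chh using Cpos by (cases "t = 0") (simp_all add: field_simps power2_eq_square, metis distrib_left)
qed

lemma part2:
  fixes D :: "real measure" and k :: "real \<Rightarrow> real" and C :: real and ch :: "real \<Rightarrow> complex"
  assumes D: "real_distribution D" and pos: "AE x in D. x > 0" and int: "integrable D (\<lambda>x. 1 / x)"
    and C_def: "C = (LINT x|D. 1 / x)" and Cpos: "C > 0"
    and ch: "\<And>t. ch t = (LINT x|D. (1 / (C * x)) *\<^sub>R iexp (t * x))"
    and kD: "\<And>r. k r = (LINT x|D. tri x r)"
  shows "fourier_gen_eq (\<lambda>r. complex_of_real (k r)) (\<lambda>t. complex_of_real (C / t\<^sup>2) * (2 - ch t - ch (- t)))"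
  unfolding fourier_gen_eq_def
proof (intro allI impI conjI)
  fix \<psi> assume \<psi>: "test_function \<psi>"
  interpret D: real_distribution D by fact
  define G where "G t = complex_of_real (C / t\<^sup>2) * (2 - ch t - ch (- t))" for t
  obtain M\<psi> where M\<psi>: "\<And>t. norm (\<psi> t) \<le> M\<psi>" "integrable lborel \<psi>" "continuous_on UNIV \<psi>"
    using test_bounded[OF \<psi>] by blast
  have M\<psi>0: "M\<psi> \<ge> 0" using M\<psi>(1)[of 0] norm_ge_zero order_trans by blast
  have \<psi>m[measurable]: "\<psi> \<in> borel_measurable borel" using M\<psi>(3) by (simp add: borel_measurable_continuous_onI)
  define F where "F = fourier \<psi>"
  have Fm[measurable]: "F \<in> borel_measurable borel" using test_fourier(1)[OF \<psi>] by (simp add: F_def)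
  have Fint: "integrable lborel F" using test_fourier(2)[OF \<psi>] by (simp add: F_def)
  have trim[measurable]: "(\<lambda>(x, r). tri x r) \<in> borel_measurable (borel \<Otimes>\<^sub>M borel)"
    unfolding tri_def by measurable
  have TTm[measurable]: "(\<lambda>(x, t). TT x t) \<in> borel_measurable (borel \<Otimes>\<^sub>M borel)"
    unfolding TT_def by measurable
  have Geq: "G t = (if t = 0 then 0 else (LINT x|D. TT x t))" for t
    using G_formula(2)[OF D int C_def Cpos ch, of t] by (cases "t = 0") (simp_all add: G_def)
  have Gm: "G \<in> borel_measurable lborel"
    unfolding Geq[abs_def] by measurable
  interpret P1: pair_sigma_finite lborel D
    by (intro pair_sigma_finite.intro lborel.sigma_finite_measure_axioms D.sigma_finite_measure_axioms)
  interpret P2: pair_sigma_finite D lborel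
    by (intro pair_sigma_finite.intro lborel.sigma_finite_measure_axioms D.sigma_finite_measure_axioms)
  have tri_le: "AE x in D. tri x r \<le> 1" for r
    using pos by eventually_elim (simp add: tri_def)
  have tri_int: "integrable D (\<lambda>x. tri x r)" for r
  proof (rule D.integrable_const_bound[where B=1])
    show "AE x in D. norm (tri x r) \<le> 1" using tri_le[of r] by eventually_elim (simp add: tri_nonneg)
  qed measurable
  have kb: "norm (k r) \<le> 1" for r
  proof -
    have "k r \<le> (LINT x|D. 1)" unfolding kD
      by (rule integral_mono_AE[OF tri_int _ tri_le]) simp
    moreover have "k r \<ge> 0" unfolding kD by (rule integral_nonneg_AE) (simp add: tri_nonneg)
    moreover have "D.prob UNIV = 1" using D.prob_space by simp
    ultimately show ?thesis by simp
  qed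
  have km[measurable]: "k \<in> borel_measurable borel"
  proof -
    have "(\<lambda>r. LINT x|D. tri x r) \<in> borel_measurable borel" by measurable
    moreover have "k = (\<lambda>r. LINT x|D. tri x r)" using kD by auto
    ultimately show ?thesis by simp
  qed
  show "integrable lborel (\<lambda>r. complex_of_real (k r) * fourier \<psi> r)"
  proof (rule Bochner_Integration.integrable_bound[OF integrable_norm[OF Fint]])
    show "AE r in lborel. norm (complex_of_real (k r) * fourier \<psi> r) \<le> norm (norm (F r))"
      using kb by (intro AE_I2) (simp add: F_def norm_mult mult_left_le_one_le)
  qed (simp add: F_def[symmetric])
  define c0 :: real where "c0 = (LBINT u. inverse (1 + u^2))"
  have TTb: "norm (\<psi> t * TT x t) \<le> M\<psi> * (8 * x / (1 + (x * t)^2))" if "x > 0" for x t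
    unfolding norm_mult by (rule mult_mono[OF M\<psi>(1) TT_bound[OF that]]) (auto simp: M\<psi>0)
  have Bint: "integrable lborel (\<lambda>t. M\<psi> * (8 * x / (1 + (x * t)^2)))" if "x > 0" for x
    using integrable_mult_right[OF inv_sq_scaled(1)[OF that], of M\<psi>] by simp
  have int_t: "integrable lborel (\<lambda>t. \<psi> t * TT x t)" if "x > 0" for x
  proof (rule Bochner_Integration.integrable_bound[OF Bint[OF that]])
    show "AE t in lborel. norm (\<psi> t * TT x t) \<le> norm (M\<psi> * (8 * x / (1 + (x * t)^2)))"
      using TTb[OF that] that M\<psi>0 by (intro AE_I2) simp
  qed measurable
  have P2int: "integrable (D \<Otimes>\<^sub>M lborel) (\<lambda>(x, t). \<psi> t * TT x t)"
  proof (rule P2.Fubini_integrable)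
    show "(\<lambda>(x, t). \<psi> t * TT x t) \<in> borel_measurable (D \<Otimes>\<^sub>M lborel)" by measurable
    show "AE x in D. integrable lborel (\<lambda>t. case (x, t) of (x, t) \<Rightarrow> \<psi> t * TT x t)"
      using pos by eventually_elim (simp add: int_t)
    show "integrable D (\<lambda>x. LBINT t. norm (case (x, t) of (x, t) \<Rightarrow> \<psi> t * TT x t))"
    proof (rule D.integrable_const_bound[where B="M\<psi> * (8 * c0)"])
      show "AE x in D. norm (LBINT t. norm (case (x, t) of (x, t) \<Rightarrow> \<psi> t * TT x t)) \<le> M\<psi> * (8 * c0)"
        using pos
      proof eventually_elim
        case (elim x)
        have "(LBINT t. norm (\<psi> t * TT x t)) \<le> (LBINT t. M\<psi> * (8 * x / (1 + (x * t)^2)))"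
          by (rule integral_mono[OF integrable_norm[OF int_t[OF elim]] Bint[OF elim] TTb[OF elim]])
        also have "\<dots> = M\<psi> * (8 * c0)" unfolding integral_mult_right_zero using inv_sq_scaled(2)[OF elim] by (simp add: c0_def)
        finally show ?case by simp
      qed
    qed measurable
  qed
  have Gint_eq: "AE t in lborel. (LINT x|D. \<psi> t * TT x t) = G t * \<psi> t"
    using AE_lborel_singleton[of 0]
  proof eventually_elim
    case (elim t)
    then show ?case unfolding Geq by (simp add: integral_mult_right_zero mult.commute)
  qed
  have IG: "integrable lborel (\<lambda>t. G t * \<psi> t)"
  proof (rule Bochner_Integration.integrable_cong_AE_imp[OF P2.integrable_snd[of "\<lambda>x t. \<psi> t * TT x t"]])
    show "integrable (D \<Otimes>\<^sub>M lborel) (\<lambda>(x, t). \<psi> t * TT x t)" by (rule P2int)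
    show "(\<lambda>t. G t * \<psi> t) \<in> borel_measurable lborel" using Gm by measurable
    show "AE t in lborel. (LINT x|D. \<psi> t * TT x t) = G t * \<psi> t" by (rule Gint_eq)
  qed
  then show "integrable lborel (\<lambda>t. complex_of_real (C / t\<^sup>2) * (2 - ch t - ch (- t)) * \<psi> t)"
    by (simp add: G_def)
  have P1int: "integrable (lborel \<Otimes>\<^sub>M D) (\<lambda>(r, x). complex_of_real (tri x r) * F r)"
  proof (rule P1.Fubini_integrable)
    show "(\<lambda>(r, x). complex_of_real (tri x r) * F r) \<in> borel_measurable (lborel \<Otimes>\<^sub>M D)" by measurable
    show "AE r in lborel. integrable D (\<lambda>x. case (r, x) of (r, x) \<Rightarrow> complex_of_real (tri x r) * F r)"
    proof (intro AE_I2)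
      fix r
      show "integrable D (\<lambda>x. case (r, x) of (r, x) \<Rightarrow> complex_of_real (tri x r) * F r)"
        using integrable_mult_left[OF integrable_of_real[OF tri_int[of r]], of "F r"] by simp
    qed
    show "integrable lborel (\<lambda>r. LINT x|D. norm (case (r, x) of (r, x) \<Rightarrow> complex_of_real (tri x r) * F r))"
    proof (rule Bochner_Integration.integrable_bound[OF integrable_norm[OF Fint]])
      show "AE r in lborel. norm (LINT x|D. norm (case (r, x) of (r, x) \<Rightarrow> complex_of_real (tri x r) * F r)) \<le> norm (norm (F r))"
      proof (intro AE_I2)
        fix r
        have "(LINT x|D. norm (complex_of_real (tri x r) * F r)) = (LINT x|D. tri x r) * norm (F r)"
          by (simp add: norm_mult tri_nonneg)
        also have "\<dots> \<le> norm (F r)" using kb[of r] kD[of r] by (intro mult_left_le_one_le) (auto intro: integral_nonneg_AE simp: tri_nonneg)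
        finally show "norm (LINT x|D. norm (case (r, x) of (r, x) \<Rightarrow> complex_of_real (tri x r) * F r)) \<le> norm (norm (F r))"
          by simp
      qed
    qed measurable
  qed
  have "(LBINT r. complex_of_real (k r) * fourier \<psi> r) = (LBINT r. (LINT x|D. complex_of_real (tri x r) * F r))"
    unfolding kD F_def by (simp add: integral_mult_left_zero)
  also have "\<dots> = (LINT x|D. (LBINT r. complex_of_real (tri x r) * F r))"
    using P1.Fubini_integral[of "\<lambda>r x. complex_of_real (tri x r) * F r"] P1int by simp
  also have "\<dots> = (LINT x|D. (LBINT t. \<psi> t * TT x t))"
  proof (rule integral_cong_AE)
    show "AE x in D. (LBINT r. complex_of_real (tri x r) * F r) = (LBINT t. \<psi> t * TT x t)"
      using pos by eventually_elim (simp add: F_def inner_fubini[OF _ \<psi>])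
  qed measurable
  also have "\<dots> = (LBINT t. (LINT x|D. \<psi> t * TT x t))"
    using P2.Fubini_integral[of "\<lambda>x t. \<psi> t * TT x t"] P2int by simp
  also have "\<dots> = (LBINT t. G t * \<psi> t)"
    by (rule integral_cong_AE[OF _ _ Gint_eq]) (use Gm in measurable)
  finally have EQ: "(LBINT r. complex_of_real (k r) * fourier \<psi> r) = (LBINT t. G t * \<psi> t)" .
  then show "(LBINT r. complex_of_real (k r) * fourier \<psi> r) = (LBINT t. complex_of_real (C / t\<^sup>2) * (2 - ch t - ch (- t)) * \<psi> t)"
    by (simp add: G_def)
qed

theorem theorem2:
  fixes M :: "'a measure" and X :: "'a \<Rightarrow> real"
    and N :: "'b measure" and Xt :: "'b \<Rightarrow> real"
    and k :: "real \<Rightarrow> real" and C :: real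
  assumes "prob_space M" and "X \<in> borel_measurable M"
    and "\<forall>x\<le>0. cdf (distr M borel X) x = 0"
    and k_def: "\<forall>r. k r = (LINT x:{0..}|distr M borel X. max 0 (1 - \<bar>r\<bar> / x))"
    and "integrable (distr M borel X) (\<lambda>x. 1 / x)"
    and C_def: "C = (LINT x|distr M borel X. 1 / x)"
    and "prob_space N" and "Xt \<in> borel_measurable N"
    and "\<forall>x. cdf (distr N borel Xt) x = (LINT t:{..x}|distr M borel X. 1 / (C * t))"
  shows "(\<forall>r\<ge>0. k r = (1 - cdf (distr M borel X) r)
                       - C * r * (1 - cdf (distr N borel Xt) r))
    \<and> fourier_gen_eq (\<lambda>r. complex_of_real (k r))
        (\<lambda>t. complex_of_real (C / t\<^sup>2) *
             (2 - char (distr N borel Xt) t - char (distr N borel Xt) (- t)))"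
proof
  show "\<forall>r\<ge>0. k r = (1 - cdf (distr M borel X) r) - C * r * (1 - cdf (distr N borel Xt) r)"
    using part1[OF assms(1-6) assms(9)] by blast
  interpret M: prob_space M by fact
  define D where "D = distr M borel X"
  have D: "real_distribution D" unfolding D_def using assms(2) by simp
  interpret D: real_distribution D by (rule D)
  have pos: "AE x in D. x > 0" and Cpos: "C > 0"
    using part_setup[OF assms(1,2,3,5)] C_def unfolding D_def by auto
  have int: "integrable D (\<lambda>x. 1 / x)" using assms(5) D_def by simp
  have ch: "char (distr N borel Xt) t = (LINT x|D. (1 / (C * x)) *\<^sub>R iexp (t * x))" for t
    using char_formula[OF assms(1,2,3,5,6,7,8,9)] unfolding D_def by blast
  have kD: "k r = (LINT x|D. tri x r)" for r
    unfolding k_def[rule_format] D_def[symmetric] set_lebesgue_integral_def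
  proof (rule integral_cong_AE)
    show "AE x in D. indicator {0..} x *\<^sub>R max 0 (1 - \<bar>r\<bar> / x) = tri x r"
      using pos by eventually_elim (simp add: tri_def)
  qed (simp_all add: D_def tri_def)
  show "fourier_gen_eq (\<lambda>r. complex_of_real (k r))
        (\<lambda>t. complex_of_real (C / t\<^sup>2) *
             (2 - char (distr N borel Xt) t - char (distr N borel Xt) (- t)))"
    by (rule part2[OF D pos int C_def[folded D_def] Cpos ch kD])
qed
end
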